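(* An even nonnegative integer $n$ satisfies $v(n)=3$ if and only if $n\in\{20,26,34,46,48,60\}$.
   Context: A hyperbinary expansion of a nonnegative integer $n$ is a word $x_0\cdots x_k$ over $\{0,1,2\}$ with $x_0\ne0$ and $\sum_i x_i2^{k-i}=n$. The empty word is the unique hyperbinary expansion of $0$. Write $\mathcal H(n)$ for the set of such expansions and $b(n)=|\mathcal H(n)|$. $A(n)$ is the directed graph on $\mathcal H(n)$ with an arc from $\mathbf x02\mathbf y$ to $\mathbf x10\mathbf y$, from $2\mathbf y$ to $10\mathbf y$, and from $\mathbf x12\mathbf y$ to $\mathbf x20\mathbf y$, for arbitrary words $\mathbf x,\mathbf y$ whenever both endpoints lie in $\mathcal H(n)$. $A(n)$ is connected. $v(n)$ denotes the cyclomatic number of $A(n)$: (number of arcs) $-\,b(n)+1$. *)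

theory Defs
  imports Main
begin

text \<open>Words over the alphabet {0,1,2} are lists of naturals, most significant digit first.\<close>

definition hb_value :: "nat list \<Rightarrow> nat" where
  "hb_value xs = foldl (\<lambda>a d. 2 * a + d) 0 xs"

definition hyperbinary :: "nat \<Rightarrow> nat list set" where
  "hyperbinary n = {xs. set xs \<subseteq> {0,1,2} \<and> (xs \<noteq> [] \<longrightarrow> hd xs \<noteq> 0) \<and> hb_value xs = n}"

definition b :: "nat \<Rightarrow> nat" where
  "b n = card (hyperbinary n)"

definition hb_arcs :: "nat \<Rightarrow> (nat list \<times> nat list) set" where
  "hb_arcs n = {(u, w). u \<in> hyperbinary n \<and> w \<in> hyperbinary n \<and>
     ((\<exists>x y. u = x @ [0,2] @ y \<and> w = x @ [1,0] @ y) \<or>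
      (\<exists>y. u = 2 # y \<and> w = [1,0] @ y) \<or>
      (\<exists>x y. u = x @ [1,2] @ y \<and> w = x @ [2,0] @ y))}"

definition v :: "nat \<Rightarrow> int" where
  "v n = int (card (hb_arcs n)) - int (b n) + 1"

end

theory Submission
  imports Defs
begin

fun bb :: "nat \<Rightarrow> nat" where
  "bb n = (if n = 0 then 1 else if odd n then bb (n div 2) else bb (n div 2) + bb (n div 2 - 1))"
fun aa :: "nat \<Rightarrow> nat" where
  "aa n = (if n = 0 then 0 else if odd n then aa (n div 2) else aa (n div 2) + aa (n div 2 - 1) + bb ((n div 2 - 1) div 2))"
definition vv where "vv n = int (aa n) - int (bb n) + 1"


lemma comp: "list_all (\<lambda>q. (vv (2*q) = 3 \<longleftrightarrow> q \<in> {10,13,17,23,24,30}) \<and> (31 \<le> q \<longrightarrow> vv (2*q) \<le> 3 \<longrightarrow> q = 31 \<or> q = 32)) [0..<62]"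
  by code_simp



lemma hbv_snoc[simp]: "hb_value (xs @ [d]) = 2 * hb_value xs + d"
  by (simp add: hb_value_def)

lemma hbv_Nil[simp]: "hb_value [] = 0" by (simp add: hb_value_def)

lemma H_snoc: "xs @ [d] \<in> hyperbinary n \<longleftrightarrow>
   d \<in> {0,1,2} \<and> (xs = [] \<longrightarrow> d \<noteq> 0) \<and> xs \<in> hyperbinary (hb_value xs) \<and> 2 * hb_value xs + d = n"
  by (auto simp: hyperbinary_def hd_append)

lemma H_mem: "xs \<in> hyperbinary n \<Longrightarrow> hb_value xs = n"
  by (simp add: hyperbinary_def)

lemma Nil_H: "[] \<in> hyperbinary n \<longleftrightarrow> n = 0"
  by (auto simp: hyperbinary_def)

lemma hbv0: "hb_value xs = 0 \<Longrightarrow> set xs \<subseteq> {0}"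
  by (induction xs rule: rev_induct) auto

lemma H0: "hyperbinary 0 = {[]}"
proof -
  have "xs \<in> hyperbinary 0 \<Longrightarrow> xs = []" for xs
  proof (rule ccontr)
    assume a: "xs \<in> hyperbinary 0" "xs \<noteq> []"
    then have "hd xs \<in> set xs" "hd xs \<noteq> 0" "hb_value xs = 0" by (auto simp: hyperbinary_def)
    then show False using hbv0[of xs] by auto
  qed
  then show ?thesis using Nil_H by blast
qed

lemma H_odd: "hyperbinary (2*m+1) = (\<lambda>xs. xs @ [1]) ` hyperbinary m"
proof (intro set_eqI iffI)
  fix w assume w: "w \<in> hyperbinary (2*m+1)"
  then have "w \<noteq> []" using Nil_H by auto
  then obtain xs d where wd: "w = xs @ [d]" by (cases w rule: rev_exhaust) auto
  with w have d: "d \<in> {0,1,2}" "xs \<in> hyperbinary (hb_value xs)" "2 * hb_value xs + d = 2*m+1"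
    by (auto simp only: H_snoc)
  then have "d = 1" "hb_value xs = m" by (auto; presburger)+
  with wd d show "w \<in> (\<lambda>xs. xs @ [1]) ` hyperbinary m" by auto
next
  fix w assume "w \<in> (\<lambda>xs. xs @ [1]) ` hyperbinary m"
  then obtain xs where "w = xs @ [1]" "xs \<in> hyperbinary m" by auto
  then show "w \<in> hyperbinary (2*m+1)" by (auto simp: H_snoc hyperbinary_def hd_append)
qed

lemma H_even: "hyperbinary (2*m+2) = (\<lambda>xs. xs @ [0]) ` hyperbinary (m+1) \<union> (\<lambda>xs. xs @ [2]) ` hyperbinary m"
proof (intro set_eqI iffI)
  fix w assume w: "w \<in> hyperbinary (2*m+2)"
  then have "w \<noteq> []" using Nil_H by auto
  then obtain xs d where wd: "w = xs @ [d]" by (cases w rule: rev_exhaust) auto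
  with w have d: "d \<in> {0,1,2}" "xs \<in> hyperbinary (hb_value xs)" "2 * hb_value xs + d = 2*m+2"
    by (auto simp only: H_snoc)
  then have "d = 0 \<and> hb_value xs = m+1 \<or> d = 2 \<and> hb_value xs = m" by (auto; presburger)
  with wd d show "w \<in> (\<lambda>xs. xs @ [0]) ` hyperbinary (m+1) \<union> (\<lambda>xs. xs @ [2]) ` hyperbinary m" by auto
next
  fix w assume "w \<in> (\<lambda>xs. xs @ [0]) ` hyperbinary (m+1) \<union> (\<lambda>xs. xs @ [2]) ` hyperbinary m"
  then show "w \<in> hyperbinary (2*m+2)"
  proof
    assume "w \<in> (\<lambda>xs. xs @ [0]) ` hyperbinary (m+1)"
    then obtain xs where "w = xs @ [0]" "xs \<in> hyperbinary (m+1)" by auto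
    moreover then have "xs \<noteq> []" using Nil_H by auto
    ultimately show ?thesis by (auto simp: H_snoc hyperbinary_def hd_append)
  next
    assume "w \<in> (\<lambda>xs. xs @ [2]) ` hyperbinary m"
    then obtain xs where "w = xs @ [2]" "xs \<in> hyperbinary m" by auto
    then show ?thesis by (auto simp: H_snoc hyperbinary_def hd_append)
  qed
qed

lemma nat_cases3:
  fixes n :: nat
  obtains "n = 0" | m where "n = 2*m+1" | m where "n = 2*m+2"
proof -
  consider "n = 0" | "odd n" | "even n" "n \<noteq> 0" by blast
  then show ?thesis
  proof cases
    case 2 then show ?thesis using that(2) by (metis oddE)
  next
    case 3 then obtain k where "n = 2*k" by blast
    with 3 have "n = 2*(k-1)+2" by simp
    then show ?thesis using that(3) by blast
  qed (use that in blast)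
qed

lemma H_finite: "finite (hyperbinary n)"
proof (induction n rule: less_induct)
  case (less n)
  show ?case
  proof (cases n rule: nat_cases3)
    case 1 then show ?thesis by (simp add: H0)
  next
    case (2 m)
    then have "finite (hyperbinary m)" using less by simp
    then show ?thesis using 2 H_odd[of m] by simp
  next
    case (3 m)
    then have "finite (hyperbinary m)" "finite (hyperbinary (m+1))" using less by simp_all
    then show ?thesis using 3 H_even[of m] by simp
  qed
qed


definition R :: "nat list \<Rightarrow> nat list \<Rightarrow> bool" where
  "R u w \<longleftrightarrow> ((\<exists>x y. u = x @ [0,2] @ y \<and> w = x @ [1,0] @ y) \<or>
      (\<exists>y. u = 2 # y \<and> w = [1,0] @ y) \<or>
      (\<exists>x y. u = x @ [1,2] @ y \<and> w = x @ [2,0] @ y))"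

definition C :: "nat list \<Rightarrow> nat list \<Rightarrow> bool" where
  "C u w \<longleftrightarrow> (\<exists>x. u = x @ [0] \<and> w = x @ [1]) \<or> (u = [] \<and> w = [1]) \<or> (\<exists>x. u = x @ [1] \<and> w = x @ [2])"

lemma arcs_R: "hb_arcs n = {(u, w). u \<in> hyperbinary n \<and> w \<in> hyperbinary n \<and> R u w}"
  unfolding hb_arcs_def R_def by simp

lemma R_Nil: "\<not> R [] w"
  by (auto simp: R_def)

lemma R_snoc: "R (u @ [d]) (w @ [e]) \<longleftrightarrow> (d = e \<and> R u w) \<or> (d = 2 \<and> e = 0 \<and> C u w)"
proof
  assume "R (u @ [d]) (w @ [e])"
  then consider (r1) x y where "u @ [d] = x @ [0,2] @ y" "w @ [e] = x @ [1,0] @ y"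
    | (r2) y where "u @ [d] = 2 # y" "w @ [e] = [1,0] @ y"
    | (r3) x y where "u @ [d] = x @ [1,2] @ y" "w @ [e] = x @ [2,0] @ y"
    unfolding R_def by blast
  then show "(d = e \<and> R u w) \<or> (d = 2 \<and> e = 0 \<and> C u w)"
  proof cases
    case r1
    show ?thesis
    proof (cases y rule: rev_exhaust)
      case Nil
      with r1 have "u @ [d] = (x @ [0]) @ [2]" "w @ [e] = (x @ [1]) @ [0]" by simp_all
      then have "u = x @ [0]" "d = 2" "w = x @ [1]" "e = 0" by (simp_all only: append1_eq_conv)
      then show ?thesis by (auto simp: C_def)
    next
      case (snoc y' z)
      with r1 have "u @ [d] = (x @ [0,2] @ y') @ [z]" "w @ [e] = (x @ [1,0] @ y') @ [z]" by simp_all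
      then have "u = x @ [0,2] @ y'" "d = z" "w = x @ [1,0] @ y'" "e = z" by (simp_all only: append1_eq_conv)
      then show ?thesis unfolding R_def by blast
    qed
  next
    case r2
    show ?thesis
    proof (cases y rule: rev_exhaust)
      case Nil
      with r2 have "u @ [d] = [] @ [2]" "w @ [e] = [1] @ [0]" by simp_all
      then have "u = []" "d = 2" "w = [1]" "e = 0" by (simp_all only: append1_eq_conv)
      then show ?thesis by (auto simp: C_def)
    next
      case (snoc y' z)
      with r2 have "u @ [d] = (2 # y') @ [z]" "w @ [e] = ([1,0] @ y') @ [z]" by simp_all
      then have "u = 2 # y'" "d = z" "w = [1,0] @ y'" "e = z" by (simp_all only: append1_eq_conv)
      then show ?thesis unfolding R_def by blast
    qed
  next
    case r3
    show ?thesis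
    proof (cases y rule: rev_exhaust)
      case Nil
      with r3 have "u @ [d] = (x @ [1]) @ [2]" "w @ [e] = (x @ [2]) @ [0]" by simp_all
      then have "u = x @ [1]" "d = 2" "w = x @ [2]" "e = 0" by (simp_all only: append1_eq_conv)
      then show ?thesis by (auto simp: C_def)
    next
      case (snoc y' z)
      with r3 have "u @ [d] = (x @ [1,2] @ y') @ [z]" "w @ [e] = (x @ [2,0] @ y') @ [z]" by simp_all
      then have "u = x @ [1,2] @ y'" "d = z" "w = x @ [2,0] @ y'" "e = z" by (simp_all only: append1_eq_conv)
      then show ?thesis unfolding R_def by blast
    qed
  qed
next
  assume "(d = e \<and> R u w) \<or> (d = 2 \<and> e = 0 \<and> C u w)"
  then show "R (u @ [d]) (w @ [e])"
  proof
    assume "d = e \<and> R u w"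
    then show ?thesis unfolding R_def
      by (elim conjE disjE exE; (simp only:)?) (metis append.assoc append_Cons)+
  next
    assume "d = 2 \<and> e = 0 \<and> C u w"
    then have de: "d = 2" "e = 0" and c: "C u w" by auto
    from c show ?thesis unfolding C_def
    proof (elim disjE exE conjE)
      fix x assume "u = x @ [0]" "w = x @ [1]"
      then have "u @ [d] = x @ [0,2] @ []" "w @ [e] = x @ [1,0] @ []" using de by simp_all
      then show ?thesis unfolding R_def by blast
    next
      assume "u = []" "w = [1]"
      then have "u @ [d] = 2 # []" "w @ [e] = [1,0] @ []" using de by simp_all
      then show ?thesis unfolding R_def by blast
    next
      fix x assume "u = x @ [1]" "w = x @ [2]"
      then have "u @ [d] = x @ [1,2] @ []" "w @ [e] = x @ [2,0] @ []" using de by simp_all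
      then show ?thesis unfolding R_def by blast
    qed
  qed
qed


definition inc :: "nat list \<Rightarrow> nat list" where
  "inc u = (if u = [] then [1] else butlast u @ [last u + 1])"

definition K :: "nat \<Rightarrow> nat list set" where
  "K m = {u \<in> hyperbinary m. u = [] \<or> last u \<noteq> 2}"

lemma K_inc: "u \<in> K m \<Longrightarrow> inc u \<in> hyperbinary (m+1)"
proof -
  assume u: "u \<in> K m"
  show ?thesis
  proof (cases u rule: rev_exhaust)
    case Nil
    with u have "m = 0" by (auto simp: K_def Nil_H)
    with Nil show ?thesis by (auto simp: inc_def hyperbinary_def hb_value_def)
  next
    case (snoc x t)
    with u have t: "t \<in> {0,1,2}" "x = [] \<longrightarrow> t \<noteq> 0" "x \<in> hyperbinary (hb_value x)" "2 * hb_value x + t = m" "t \<noteq> 2"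
      by (auto simp: K_def H_snoc)
    then have "x @ [t+1] \<in> hyperbinary (m+1)" unfolding H_snoc by auto
    with snoc show ?thesis by (simp add: inc_def)
  qed
qed

lemma C_iff: "u \<in> hyperbinary m \<Longrightarrow> C u w \<longleftrightarrow> (u \<in> K m \<and> w = inc u)"
proof
  assume u: "u \<in> hyperbinary m" and "C u w"
  then show "u \<in> K m \<and> w = inc u" by (auto simp: C_def K_def inc_def)
next
  assume u: "u \<in> hyperbinary m" and k: "u \<in> K m \<and> w = inc u"
  show "C u w"
  proof (cases u rule: rev_exhaust)
    case Nil
    with k show ?thesis by (simp add: C_def inc_def)
  next
    case (snoc x t)
    with u k have "t \<in> {0,1}" "w = x @ [t+1]" by (auto simp: K_def H_snoc inc_def)
    with snoc show ?thesis by (auto simp: C_def)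
  qed
qed

lemma A_odd: "hb_arcs (2*m+1) = (\<lambda>(u,w). (u @ [1], w @ [1])) ` hb_arcs m"
proof (intro set_eqI iffI)
  fix p assume p: "p \<in> hb_arcs (2*m+1)"
  then obtain u' w' where pp: "p = (u', w')" "u' \<in> hyperbinary (2*m+1)" "w' \<in> hyperbinary (2*m+1)" "R u' w'"
    by (auto simp: arcs_R)
  then obtain u w where uw: "u' = u @ [1]" "w' = w @ [1]" "u \<in> hyperbinary m" "w \<in> hyperbinary m"
    using H_odd[of m] by auto
  with pp have "R u w" by (simp add: R_snoc)
  with uw pp show "p \<in> (\<lambda>(u,w). (u @ [1], w @ [1])) ` hb_arcs m"
    by (auto simp: arcs_R)
next
  fix p assume "p \<in> (\<lambda>(u,w). (u @ [1], w @ [1])) ` hb_arcs m"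
  then obtain u w where "p = (u @ [1], w @ [1])" "u \<in> hyperbinary m" "w \<in> hyperbinary m" "R u w"
    by (auto simp: arcs_R)
  then show "p \<in> hb_arcs (2*m+1)" using H_odd[of m] by (auto simp: arcs_R R_snoc)
qed

lemma A_even: "hb_arcs (2*m+2) = (\<lambda>(u,w). (u @ [0], w @ [0])) ` hb_arcs (m+1)
   \<union> (\<lambda>(u,w). (u @ [2], w @ [2])) ` hb_arcs m \<union> (\<lambda>u. (u @ [2], inc u @ [0])) ` K m"
proof (intro set_eqI iffI)
  fix p assume p: "p \<in> hb_arcs (2*m+2)"
  then obtain u' w' where pp: "p = (u', w')" "u' \<in> hyperbinary (2*m+2)" "w' \<in> hyperbinary (2*m+2)" "R u' w'"
    by (auto simp: arcs_R)
  from pp(2) obtain u d where ud: "u' = u @ [d]" "d = 0 \<and> u \<in> hyperbinary (m+1) \<or> d = 2 \<and> u \<in> hyperbinary m"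
    using H_even[of m] by auto
  from pp(3) obtain w e where we: "w' = w @ [e]" "e = 0 \<and> w \<in> hyperbinary (m+1) \<or> e = 2 \<and> w \<in> hyperbinary m"
    using H_even[of m] by auto
  from pp(4) ud we have r: "(d = e \<and> R u w) \<or> (d = 2 \<and> e = 0 \<and> C u w)" by (simp add: R_snoc)
  show "p \<in> (\<lambda>(u,w). (u @ [0], w @ [0])) ` hb_arcs (m+1)
   \<union> (\<lambda>(u,w). (u @ [2], w @ [2])) ` hb_arcs m \<union> (\<lambda>u. (u @ [2], inc u @ [0])) ` K m"
  proof (cases "d = 2 \<and> e = 0")
    case True
    with ud we r have "u \<in> hyperbinary m" "C u w" by auto
    then have "u \<in> K m" "w = inc u" using C_iff by blast+
    with True ud we pp show ?thesis by auto
  next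
    case False
    with r have "d = e" "R u w" by auto
    with ud we pp show ?thesis by (auto simp: arcs_R)
  qed
next
  fix p assume "p \<in> (\<lambda>(u,w). (u @ [0], w @ [0])) ` hb_arcs (m+1)
   \<union> (\<lambda>(u,w). (u @ [2], w @ [2])) ` hb_arcs m \<union> (\<lambda>u. (u @ [2], inc u @ [0])) ` K m"
  then consider (a) u w where "p = (u @ [0], w @ [0])" "u \<in> hyperbinary (m+1)" "w \<in> hyperbinary (m+1)" "R u w"
    | (b) u w where "p = (u @ [2], w @ [2])" "u \<in> hyperbinary m" "w \<in> hyperbinary m" "R u w"
    | (c) u where "p = (u @ [2], inc u @ [0])" "u \<in> K m"
    by (auto simp: arcs_R)
  then show "p \<in> hb_arcs (2*m+2)"
  proof cases
    case a then show ?thesis using H_even[of m] by (auto simp: arcs_R R_snoc)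
  next
    case b then show ?thesis using H_even[of m] by (auto simp: arcs_R R_snoc)
  next
    case c
    then have "u \<in> hyperbinary m" "inc u \<in> hyperbinary (m+1)" "C u (inc u)"
      using K_inc C_iff[of u m] by (auto simp: K_def)
    with c show ?thesis using H_even[of m] by (auto simp: arcs_R R_snoc)
  qed
qed


lemma b0: "b 0 = 1" by (simp add: b_def H0)

lemma b_odd: "b (2*m+1) = b m"
proof -
  have "inj_on (\<lambda>xs. xs @ [1::nat]) (hyperbinary m)" by (auto simp: inj_on_def)
  then show ?thesis unfolding b_def H_odd by (simp add: card_image)
qed

lemma b_even: "b (2*m+2) = b (m+1) + b m"
proof -
  have i: "inj_on (\<lambda>xs. xs @ [d::nat]) X" for d X by (auto simp: inj_on_def)
  have "(\<lambda>xs. xs @ [0::nat]) ` hyperbinary (m+1) \<inter> (\<lambda>xs. xs @ [2]) ` hyperbinary m = {}" by auto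
  then have "card (hyperbinary (2*m+2)) = card ((\<lambda>xs. xs @ [0::nat]) ` hyperbinary (m+1)) + card ((\<lambda>xs. xs @ [2]) ` hyperbinary m)"
    unfolding H_even by (intro card_Un_disjoint) (simp_all add: H_finite)
  then show ?thesis unfolding b_def by (simp add: card_image[OF i])
qed

lemma arcs_finite: "finite (hb_arcs n)"
proof -
  have "hb_arcs n \<subseteq> hyperbinary n \<times> hyperbinary n" by (auto simp: arcs_R)
  then show ?thesis using finite_subset H_finite by blast
qed

lemma a0: "card (hb_arcs 0) = 0"
proof -
  have "hb_arcs 0 = {}" by (auto simp: arcs_R H0 R_Nil)
  then show ?thesis by simp
qed

lemma a_odd: "card (hb_arcs (2*m+1)) = card (hb_arcs m)"
proof -
  show ?thesis unfolding A_odd by (rule card_image) (auto simp: inj_on_def)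
qed

lemma K_card: "card (K m) = b (m div 2)"
proof (cases m rule: nat_cases3)
  case 1
  then have "K m = {[]}" by (auto simp: K_def H0)
  with 1 show ?thesis by (simp add: b0)
next
  case (2 k)
  then have "K m = hyperbinary m" using H_odd[of k] by (auto simp: K_def)
  with 2 show ?thesis using b_odd[of k] by (simp add: b_def)
next
  case (3 k)
  then have "K m = (\<lambda>xs. xs @ [0]) ` hyperbinary (k+1)"
    using H_even[of k] by (auto simp: K_def)
  moreover have "inj_on (\<lambda>xs. xs @ [0::nat]) X" for X by (auto simp: inj_on_def)
  ultimately show ?thesis using 3 by (simp add: card_image b_def)
qed

lemma a_even: "card (hb_arcs (2*m+2)) = card (hb_arcs (m+1)) + card (hb_arcs m) + b (m div 2)"
proof -
  let ?A = "(\<lambda>(u,w). (u @ [0::nat], w @ [0])) ` hb_arcs (m+1)"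
  let ?B = "(\<lambda>(u,w). (u @ [2::nat], w @ [2])) ` hb_arcs m"
  let ?C = "(\<lambda>u. (u @ [2::nat], inc u @ [0])) ` K m"
  have fK: "finite (K m)" using H_finite by (simp add: K_def)
  have d1: "?A \<inter> ?B = {}" by auto
  have d2: "(?A \<union> ?B) \<inter> ?C = {}" by auto
  have "card (?A \<union> ?B \<union> ?C) = card (?A \<union> ?B) + card ?C"
    by (rule card_Un_disjoint) (use d2 fK arcs_finite in auto)
  also have "card (?A \<union> ?B) = card ?A + card ?B"
    by (rule card_Un_disjoint) (use d1 arcs_finite in auto)
  also have "card ?A = card (hb_arcs (m+1))"
    by (rule card_image) (auto simp: inj_on_def)
  also have "card ?B = card (hb_arcs m)"
    by (rule card_image) (auto simp: inj_on_def)
  also have "card ?C = card (K m)"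
    by (rule card_image) (auto simp: inj_on_def)
  finally show ?thesis unfolding A_even K_card .
qed


declare bb.simps[simp del] aa.simps[simp del]

lemma b_bb: "b n = bb n"
proof (induction n rule: less_induct)
  case (less n)
  show ?case
  proof (cases n rule: nat_cases3)
    case 1 then show ?thesis by (simp add: b0 bb.simps)
  next
    case (2 m)
    then show ?thesis using less[of m] b_odd[of m] by (subst bb.simps) simp
  next
    case (3 m)
    then show ?thesis using less[of m] less[of "m+1"] b_even[of m] by (subst bb.simps) simp
  qed
qed

lemma a_aa: "card (hb_arcs n) = aa n"
proof (induction n rule: less_induct)
  case (less n)
  show ?case
  proof (cases n rule: nat_cases3)
    case 1 then show ?thesis by (simp add: a0 aa.simps)
  next
    case (2 m)
    then show ?thesis using less[of m] a_odd[of m] by (subst aa.simps) simp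
  next
    case (3 m)
    then have "(n div 2 - 1) div 2 = m div 2" by simp
    then show ?thesis using 3 less[of m] less[of "m+1"] a_even[of m] b_bb[of "m div 2"] by (subst aa.simps) simp
  qed
qed

lemma v_vv: "v n = vv n"
  by (simp add: v_def vv_def a_aa b_bb)

lemma b_pos: "b n \<ge> 1"
proof (induction n rule: less_induct)
  case (less n)
  show ?case
  proof (cases n rule: nat_cases3)
    case 1 then show ?thesis by (simp add: b0)
  next
    case (2 m) then show ?thesis using less[of m] b_odd[of m] by simp
  next
    case (3 m) then show ?thesis using less[of m] b_even[of m] by simp
  qed
qed

lemma v_odd: "v (2*m+1) = v m"
  by (simp only: v_def a_odd b_odd)

lemma v_even: "v (2*m+2) = v (m+1) + v m + int (b (m div 2)) - 1"
  unfolding v_def a_even b_even by simp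

lemma v_nonneg: "v n \<ge> 0"
proof (induction n rule: less_induct)
  case (less n)
  show ?case
  proof (cases n rule: nat_cases3)
    case 1 then show ?thesis by (simp add: v_def a0 b0)
  next
    case (2 m) then show ?thesis using less[of m] v_odd[of m] by simp
  next
    case (3 m) then show ?thesis using less[of m] less[of "m+1"] v_even[of m] b_pos[of "m div 2"] by simp
  qed
qed

lemma L2: "q \<ge> 1 \<Longrightarrow> v (2*q) = v (2*(q div 2)) + v ((q-1) div 2) + int (b ((q-1) div 2)) - 1"
proof -
  assume "q \<ge> 1"
  then consider j where "q = 2*j+1" | j where "q = 2*j+2"
    by (metis nat_cases3 not_one_le_zero)
  then show ?thesis
  proof cases
    case 1
    then have "2*q = 2*(2*j)+2" "q div 2 = j" "(q-1) div 2 = j" "2*j div 2 = j" by simp_all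
    then show ?thesis using v_even[of "2*j"] v_odd[of j] by simp
  next
    case 2
    then have "2*q = 2*(2*j+1)+2" "q div 2 = j+1" "(q-1) div 2 = j" "(2*j+1) div 2 = j" by simp_all
    then show ?thesis using v_even[of "2*j+1"] v_odd[of j] by (simp add: algebra_simps)
  qed
qed

lemma L3: "even e \<Longrightarrow> e < 2 ^ b e"
proof (induction e rule: less_induct)
  case (less e)
  show ?case
  proof (cases e rule: nat_cases3)
    case 1 then show ?thesis by (simp add: b0)
  next
    case (2 m) with less.prems show ?thesis by simp
  next
    case (3 m)
    have pb: "b m \<ge> 1" "b (m+1) \<ge> 1" by (rule b_pos)+
    have mono: "(2::nat) ^ (x + 1) \<le> 2 ^ (x + y)" if "y \<ge> 1" for x y
      using that by (intro power_increasing) auto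
    show ?thesis
    proof (cases "even m")
      case True
      have "m < 2 ^ b m" using less.IH[of m] True 3 by simp
      moreover have "even ((2::nat) ^ b m)" using pb by simp
      moreover have "m + 1 \<noteq> 2 ^ b m"
      proof
        assume "m + 1 = 2 ^ b m"
        then have "even (m+1)" using \<open>even ((2::nat) ^ b m)\<close> by simp
        with True show False by simp
      qed
      ultimately have "m + 1 < 2 ^ b m" by linarith
      then have "2*m+2 < 2 ^ (b m + 1)" by simp
      also have "\<dots> \<le> 2 ^ (b m + b (m+1))" using mono[OF pb(2)] by simp
      finally show ?thesis using 3 b_even[of m] by (simp add: add.commute)
    next
      case False
      have "m + 1 < 2 ^ b (m+1)" using less.IH[of "m+1"] False 3 by simp
      then have "2*m+2 < 2 ^ (b (m+1) + 1)" by simp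
      also have "\<dots> \<le> 2 ^ (b (m+1) + b m)" using mono[OF pb(1)] by simp
      finally show ?thesis using 3 b_even[of m] by simp
    qed
  qed
qed

lemma ones: "b (2^i - 1) = 1 \<and> v (2^i - 1) = 0"
proof (induction i)
  case 0 then show ?case by (simp add: b0 v_def a0)
next
  case (Suc i)
  have p: "(2::nat)^i \<ge> 1" by simp
  have "(2::nat)^Suc i - 1 = 2*(2^i - 1) + 1"
    using p by (simp only: power_Suc; linarith?)
  then show ?case using Suc b_odd[of "2^i - 1"] v_odd[of "2^i - 1"] by simp
qed


lemma v0: "v 0 = 0" by (simp add: v_def a0 b0)

lemma zeros: "v (2*2^a) = 0 \<and> v (2*(2^a - 1)) = 0"
proof (induction a)
  case 0
  have "v 2 = v 1 + v 0 + int (b 0) - 1" using v_even[of 0] by (simp add: numeral_2_eq_2)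
  moreover have "v 1 = v 0" using v_odd[of 0] by simp
  ultimately show ?case by (simp add: v0 b0)
next
  case (Suc a)
  define x :: nat where "x = 2^a"
  have x1: "x \<ge> 1" by (simp add: x_def)
  have e: "(2::nat)^Suc a = 2*x" by (simp add: x_def)
  have o: "b (x - 1) = 1" "v (x - 1) = 0" using ones[of a] by (simp_all add: x_def)
  have A: "v (2*(2*x)) = 0"
  proof -
    have "2*x \<ge> 1" "(2*x) div 2 = x" "(2*x - 1) div 2 = x - 1" using x1 by simp_all
    then show ?thesis using L2[of "2*x"] Suc o by (simp add: x_def)
  qed
  have B: "v (2*(2*x - 1)) = 0"
  proof -
    have "2*x - 1 \<ge> 1" using x1 by simp
    moreover have "(2*x - 1) div 2 = x - 1" using x1 by presburger
    moreover have "(2*x - 1 - 1) div 2 = x - 1" using x1 by presburger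
    ultimately show ?thesis using L2[of "2*x - 1"] Suc o by (simp add: x_def)
  qed
  show ?case using A B e by simp
qed

lemma comp': "q < 62 \<Longrightarrow> (v (2*q) = 3 \<longleftrightarrow> q \<in> {10,13,17,23,24,30}) \<and> (31 \<le> q \<longrightarrow> v (2*q) \<le> 3 \<longrightarrow> q = 31 \<or> q = 32)"
  using comp unfolding list_all_iff v_vv by auto

definition Zq :: "nat \<Rightarrow> bool" where "Zq q \<longleftrightarrow> (\<exists>a. q = 2^a \<or> q = 2^a - 1)"

lemma big: "q \<ge> 31 \<Longrightarrow> v (2*q) \<le> 3 \<Longrightarrow> Zq q"
proof (induction q rule: less_induct)
  case (less q)
  show ?case
  proof (cases "q < 62")
    case True
    then have "q = 31 \<or> q = 32" using comp'[of q] less.prems by auto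
    then show ?thesis unfolding Zq_def
    proof (elim disjE)
      assume "q = 31" then show "\<exists>a. q = 2^a \<or> q = 2^a - 1" by (intro exI[of _ 5]) simp
    next
      assume "q = 32" then show "\<exists>a. q = 2^a \<or> q = 2^a - 1" by (intro exI[of _ 5]) simp
    qed
  next
    case False
    define p where "p = q div 2"
    define j where "j = (q - 1) div 2"
    have q1: "q \<ge> 1" using False by simp
    have eq: "v (2*q) = v (2*p) + v j + int (b j) - 1" using L2[OF q1] by (simp add: p_def j_def)
    have nn: "v j \<ge> 0" "b j \<ge> 1" by (rule v_nonneg, rule b_pos)
    have "v (2*p) \<le> 3" using eq nn less.prems by linarith
    moreover have "p < q" "p \<ge> 31" using False by (simp_all add: p_def)
    ultimately have Zp: "Zq p" using less.IH by blast
    have jodd: "odd j"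
    proof
      assume ej: "even j"
      have "int (b j) \<le> 4" using eq nn less.prems v_nonneg[of "2*p"] by linarith
      then have "b j \<le> 4" by simp
      then have "(2::nat) ^ b j \<le> 2^4" by (intro power_increasing) auto
      then have "j < 16" using L3[OF ej] by simp
      then show False using False by (simp add: j_def)
    qed
    from Zp obtain a where pa: "p = 2^a \<or> p = 2^a - 1" unfolding Zq_def by blast
    have qp: "q = 2*p \<or> q = 2*p + 1" unfolding p_def by presburger
    show ?thesis
    proof (cases "p = 2^a")
      case True
      show ?thesis
      proof (cases "q = 2*p")
        case True
        then show ?thesis using \<open>p = 2^a\<close> unfolding Zq_def by (metis power_Suc)
      next
        case False
        then have "q = 2*p+1" using qp by simp
        then have "j = p" by (simp add: j_def)
        with jodd \<open>p = 2^a\<close> have "a = 0" by (cases a) auto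
        with \<open>p = 2^a\<close> \<open>p \<ge> 31\<close> show ?thesis by simp
      qed
    next
      case False
      then have pa': "p = 2^a - 1" using pa by simp
      with \<open>p \<ge> 31\<close> have "a \<noteq> 0" by (cases a) auto
      then have ev: "even p = False" using pa' by (cases a) auto
      show ?thesis
      proof (cases "q = 2*p")
        case True
        then have "j = p - 1" by (simp add: j_def)
        with jodd ev \<open>p \<ge> 31\<close> show ?thesis by simp
      next
        case False
        then have "q = 2*p+1" using qp by simp
        then have "q = 2^Suc a - 1" using pa' \<open>p \<ge> 31\<close> by simp
        then show ?thesis unfolding Zq_def by blast
      qed
    qed
  qed
qed

theorem mainTheorem5:
  fixes n :: nat
  assumes "even n"
  shows "v n = 3 \<longleftrightarrow> n \<in> {20, 26, 34, 46, 48, 60}"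
proof -
  obtain q where n: "n = 2*q" using assms by blast
  have S: "n \<in> {20, 26, 34, 46, 48, 60} \<longleftrightarrow> q \<in> {10,13,17,23,24,30}" using n by auto
  show ?thesis
  proof (cases "q < 62")
    case True
    then show ?thesis using comp'[OF True] n S by simp
  next
    case False
    have "v (2*q) \<noteq> 3"
    proof
      assume "v (2*q) = 3"
      then have "Zq q" using big False by simp
      then obtain a where "q = 2^a \<or> q = 2^a - 1" unfolding Zq_def by blast
      then have "v (2*q) = 0" using zeros[of a] by auto
      with \<open>v (2*q) = 3\<close> show False by simp
    qed
    then show ?thesis using n S False by auto
  qed
qed

end
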